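(* Let $|\psi_{L_3}\rangle$ be the 3-qubit linear cluster state, subjected to independent local depolarizing noise $\mathcal{E}_p^i(\rho)=(1-p)\rho+\frac p3(X_i\rho X_i+Y_i\rho Y_i+Z_i\rho Z_i)$ on each qubit $i$. If $$27-126p+156p^2-64p^3\le 0,$$ (i.e. $p$ is at least approximately $0.332$), then the resulting state cannot be purified to $|\psi_{L_3}\rangle$ by any protocol. For the 2-qubit case (a Bell pair under the same noise), purification is possible iff $(1-p)^2+p^2/3>1/2$.
   Context: Graph state $|\psi_G\rangle$: common $+1$ eigenstate of $K_i=X_i\prod_{\{i,j\}\in E_G}Z_j$; the linear cluster state is the graph state of a path graph. Purification: each qubit held by a distinct party holding that qubit from arbitrarily many copies; using SLOCC they must produce the target pure state with fidelity arbitrarily close to 1. Known input: a two-qubit Bell-diagonal state with weight $\lambda_{00}$ on the target Bell state is purifiable iff $\lambda_{00}>1/2$. *)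

theory Defs
  imports Complex_Main
begin

text \<open>An n-qubit computational basis index is a bit string x :: nat => bool with
  x i = False for i >= n (qubit i carries the bit x i).\<close>

definition qbits :: "nat \<Rightarrow> (nat \<Rightarrow> bool) set" where
  "qbits n = {x. \<forall>i. n \<le> i \<longrightarrow> \<not> x i}"

type_synonym vec = "(nat \<Rightarrow> bool) \<Rightarrow> complex"
type_synonym op = "(nat \<Rightarrow> bool) \<Rightarrow> (nat \<Rightarrow> bool) \<Rightarrow> complex"
type_synonym qop = "bool \<Rightarrow> bool \<Rightarrow> complex"

definition normalized :: "nat \<Rightarrow> vec \<Rightarrow> bool" where
  "normalized n \<psi> \<longleftrightarrow> (\<Sum>x\<in>qbits n. (cmod (\<psi> x))\<^sup>2) = 1"

definition proj :: "vec \<Rightarrow> op" where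
  "proj \<psi> x x' = \<psi> x * cnj (\<psi> x')"

subsection \<open>Pauli matrices (rows/columns indexed by False = |0>, True = |1>)\<close>

definition pauliX :: qop where
  "pauliX a b = (if a \<noteq> b then 1 else 0)"
definition pauliY :: qop where
  "pauliY a b = (if a = b then 0 else if a then \<i> else - \<i>)"
definition pauliZ :: qop where
  "pauliZ a b = (if a = b then (if a then -1 else 1) else 0)"

text \<open>Conjugation of an n-qubit operator by a single-qubit operator P acting on qubit i:
  P_i rho P_i^dagger.\<close>
definition local_conj :: "qop \<Rightarrow> nat \<Rightarrow> op \<Rightarrow> op" where
  "local_conj P i \<rho> x x' =
     (\<Sum>a\<in>(UNIV::bool set). \<Sum>b\<in>(UNIV::bool set).
        P (x i) a * \<rho> (x(i := a)) (x'(i := b)) * cnj (P (x' i) b))"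

definition depol :: "real \<Rightarrow> nat \<Rightarrow> op \<Rightarrow> op" where
  "depol p i \<rho> x x' =
     complex_of_real (1 - p) * \<rho> x x'
     + complex_of_real (p / 3) * (local_conj pauliX i \<rho> x x' + local_conj pauliY i \<rho> x x'
                                 + local_conj pauliZ i \<rho> x x')"

fun depol_all :: "real \<Rightarrow> nat \<Rightarrow> op \<Rightarrow> op" where
  "depol_all p 0 \<rho> = \<rho>"
| "depol_all p (Suc i) \<rho> = depol p i (depol_all p i \<rho>)"

text \<open>Graph given by a symmetric edge predicate E on vertices 0..n-1.
  (K_i psi)(x) for K_i = X_i prod_{j ~ i} Z_j.\<close>
definition stab_gen :: "(nat \<Rightarrow> nat \<Rightarrow> bool) \<Rightarrow> nat \<Rightarrow> nat \<Rightarrow> vec \<Rightarrow> vec" where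
  "stab_gen E n i \<psi> x =
     (\<Prod>j\<in>{j. j < n \<and> E i j}. if x j then -1 else 1) * \<psi> (x(i := \<not> x i))"

definition is_graph_state :: "(nat \<Rightarrow> nat \<Rightarrow> bool) \<Rightarrow> nat \<Rightarrow> vec \<Rightarrow> bool" where
  "is_graph_state E n \<psi> \<longleftrightarrow> normalized n \<psi> \<and>
     (\<forall>i<n. \<forall>x\<in>qbits n. stab_gen E n i \<psi> x = \<psi> x)"

definition path_graph :: "nat \<Rightarrow> nat \<Rightarrow> bool" where
  "path_graph i j \<longleftrightarrow> i + 1 = j \<or> j + 1 = i"

definition bell :: vec where
  "bell x = (if x 0 = x 1 then complex_of_real (1 / sqrt 2) else 0)"

text \<open>k copies of an n-qubit state: index y with y j = basis index of copy j.\<close>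
definition cfgs :: "nat \<Rightarrow> nat \<Rightarrow> (nat \<Rightarrow> nat \<Rightarrow> bool) set" where
  "cfgs n k = {y. \<forall>j. (j < k \<longrightarrow> y j \<in> qbits n) \<and> (k \<le> j \<longrightarrow> y j = (\<lambda>_. False))}"

definition tpow :: "op \<Rightarrow> nat \<Rightarrow> (nat \<Rightarrow> nat \<Rightarrow> bool) \<Rightarrow> (nat \<Rightarrow> nat \<Rightarrow> bool) \<Rightarrow> complex" where
  "tpow \<rho> k y y' = (\<Prod>j<k. \<rho> (y j) (y' j))"

text \<open>Register of party i: its qubits from all copies (bit of copy j).\<close>
definition reg :: "(nat \<Rightarrow> nat \<Rightarrow> bool) \<Rightarrow> nat \<Rightarrow> (nat \<Rightarrow> bool)" where
  "reg y i = (\<lambda>j. y j i)"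

text \<open>A SLOCC (separable) operation: finitely many branches r < m, each a product Kraus
  operator A r 0 \<otimes> ... \<otimes> A r (n-1), where A r i maps party i's k-qubit register to
  one qubit (A r i b z = matrix entry <b| A |z>).\<close>
definition kraus_el :: "nat \<Rightarrow> (nat \<Rightarrow> nat \<Rightarrow> bool \<Rightarrow> (nat \<Rightarrow> bool) \<Rightarrow> complex)
      \<Rightarrow> nat \<Rightarrow> (nat \<Rightarrow> bool) \<Rightarrow> (nat \<Rightarrow> nat \<Rightarrow> bool) \<Rightarrow> complex" where
  "kraus_el n A r x y = (\<Prod>i<n. A r i (x i) (reg y i))"

definition slocc_out :: "nat \<Rightarrow> nat \<Rightarrow> nat \<Rightarrow> (nat \<Rightarrow> nat \<Rightarrow> bool \<Rightarrow> (nat \<Rightarrow> bool) \<Rightarrow> complex)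
      \<Rightarrow> op \<Rightarrow> op" where
  "slocc_out n k m A \<rho> x x' =
     (\<Sum>r<m. \<Sum>y\<in>cfgs n k. \<Sum>y'\<in>cfgs n k.
        kraus_el n A r x y * tpow \<rho> k y y' * cnj (kraus_el n A r x' y'))"

definition trace_op :: "nat \<Rightarrow> op \<Rightarrow> complex" where
  "trace_op n \<sigma> = (\<Sum>x\<in>qbits n. \<sigma> x x)"

definition overlap :: "nat \<Rightarrow> vec \<Rightarrow> op \<Rightarrow> complex" where
  "overlap n \<psi> \<sigma> = (\<Sum>x\<in>qbits n. \<Sum>x'\<in>qbits n. cnj (\<psi> x) * \<sigma> x x' * \<psi> x')"

definition purifiable :: "nat \<Rightarrow> op \<Rightarrow> vec \<Rightarrow> bool" where
  "purifiable n \<rho> \<psi> \<longleftrightarrow>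
     (\<forall>\<epsilon>>0. \<exists>k m A. 0 < k \<and>
        0 < Re (trace_op n (slocc_out n k m A \<rho>)) \<and>
        Re (overlap n \<psi> (slocc_out n k m A \<rho>)) \<ge> (1 - \<epsilon>) * Re (trace_op n (slocc_out n k m A \<rho>)))"

end

theory Submission
  imports Defs "HOL-Library.FuncSet"
begin

definition sw1 :: "(nat \<Rightarrow> nat \<Rightarrow> bool) \<Rightarrow> (nat \<Rightarrow> nat \<Rightarrow> bool) \<Rightarrow> (nat \<Rightarrow> nat \<Rightarrow> bool)" where
  "sw1 y y' = (\<lambda>j. (y j)(0 := y' j 0))"

lemma sw1_invol: "sw1 (sw1 y y') (sw1 y' y) = y"
  by (auto simp: sw1_def fun_eq_iff)

lemma sw1_cfgs: "0 < n \<Longrightarrow> y \<in> cfgs n k \<Longrightarrow> y' \<in> cfgs n k \<Longrightarrow> sw1 y y' \<in> cfgs n k"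
  by (auto simp: sw1_def cfgs_def qbits_def)

lemma finite_qbits: "finite (qbits n)"
proof -
  have "qbits n \<subseteq> (\<lambda>S i. i \<in> S) ` Pow {..<n}"
  proof
    fix x assume "x \<in> qbits n"
    then have "x = (\<lambda>i. i \<in> {i. x i})" and "{i. x i} \<in> Pow {..<n}"
      by (auto simp: qbits_def not_le[symmetric])
    then show "x \<in> (\<lambda>S i. i \<in> S) ` Pow {..<n}" by blast
  qed
  then show ?thesis by (rule finite_subset) simp
qed

lemma finite_cfgs: "finite (cfgs n k)"
proof -
  have "cfgs n k \<subseteq> (\<lambda>f j. if j < k then f j else (\<lambda>_. False)) ` PiE {..<k} (\<lambda>_. qbits n)"
  proof
    fix y assume y: "y \<in> cfgs n k"
    let ?f = "\<lambda>j. if j < k then y j else undefined"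
    have mem: "?f \<in> PiE {..<k} (\<lambda>_. qbits n)" using y unfolding cfgs_def PiE_def extensional_def by auto
    have eq: "y = (\<lambda>j. if j < k then ?f j else (\<lambda>_. False))"
    proof
      fix j show "y j = (if j < k then ?f j else (\<lambda>_. False))" using y unfolding cfgs_def by auto
    qed
    show "y \<in> (\<lambda>f j. if j < k then f j else (\<lambda>_. False)) ` PiE {..<k} (\<lambda>_. qbits n)" by (rule image_eqI[where f="\<lambda>f j. if j < k then f j else (\<lambda>_. False)", OF eq mem])
  qed
  then show ?thesis by (rule finite_subset) (auto intro!: finite_PiE finite_qbits)
qed

lemma sum_swap_cfgs:
  assumes "0 < n"
  shows "(\<Sum>y\<in>cfgs n k. \<Sum>y'\<in>cfgs n k. F y y') = (\<Sum>y\<in>cfgs n k. \<Sum>y'\<in>cfgs n k. F (sw1 y y') (sw1 y' y))"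
proof -
  have "(\<Sum>y\<in>cfgs n k. \<Sum>y'\<in>cfgs n k. F y y') = (\<Sum>z\<in>cfgs n k \<times> cfgs n k. F (fst z) (snd z))"
    by (simp add: sum.cartesian_product case_prod_beta)
  also have "\<dots> = (\<Sum>z\<in>cfgs n k \<times> cfgs n k. F (sw1 (fst z) (snd z)) (sw1 (snd z) (fst z)))"
  proof (rule sum.reindex_bij_witness[where i="\<lambda>z. (sw1 (fst z) (snd z), sw1 (snd z) (fst z))"
          and j="\<lambda>z. (sw1 (fst z) (snd z), sw1 (snd z) (fst z))"])
    fix z assume "z \<in> cfgs n k \<times> cfgs n k"
    then show "(sw1 (fst z) (snd z), sw1 (snd z) (fst z)) \<in> cfgs n k \<times> cfgs n k"
      using sw1_cfgs[OF assms] by (cases z) simp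
  qed (auto simp add: sw1_invol sw1_cfgs[OF assms])
  also have "\<dots> = (\<Sum>y\<in>cfgs n k. \<Sum>y'\<in>cfgs n k. F (sw1 y y') (sw1 y' y))"
    by (simp add: sum.cartesian_product case_prod_beta)
  finally show ?thesis .
qed

lemma tpow_gram:
  assumes fin: "finite Ls"
    and hr: "\<forall>u\<in>qbits n. \<forall>u'\<in>qbits n. \<rho> u u' =
       (\<Sum>l\<in>Ls. complex_of_real (c l) * g l (u(0 := u' 0)) * cnj (g l (u'(0 := u 0))))"
    and y: "y \<in> cfgs n k" and y': "y' \<in> cfgs n k"
  shows "tpow \<rho> k y y' = (\<Sum>L\<in>PiE {..<k} (\<lambda>_. Ls).
      complex_of_real (\<Prod>j<k. c (L j)) * (\<Prod>j<k. g (L j) (sw1 y y' j)) * cnj (\<Prod>j<k. g (L j) (sw1 y' y j)))"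
proof -
  have "tpow \<rho> k y y' = (\<Prod>j<k. \<Sum>l\<in>Ls. complex_of_real (c l) * g l (sw1 y y' j) * cnj (g l (sw1 y' y j)))"
    unfolding tpow_def
  proof (rule prod.cong[OF refl])
    fix j assume "j \<in> {..<k}"
    then have "y j \<in> qbits n" "y' j \<in> qbits n" using y y' by (auto simp: cfgs_def)
    then show "\<rho> (y j) (y' j) = (\<Sum>l\<in>Ls. complex_of_real (c l) * g l (sw1 y y' j) * cnj (g l (sw1 y' y j)))"
      using hr by (simp add: sw1_def)
  qed
  also have "\<dots> = (\<Sum>L\<in>PiE {..<k} (\<lambda>_. Ls). \<Prod>j<k. complex_of_real (c (L j)) * g (L j) (sw1 y y' j) * cnj (g (L j) (sw1 y' y j)))"
    by (rule prod_sum_PiE) (auto simp: fin)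
  also have "\<dots> = (\<Sum>L\<in>PiE {..<k} (\<lambda>_. Ls).
      complex_of_real (\<Prod>j<k. c (L j)) * (\<Prod>j<k. g (L j) (sw1 y y' j)) * cnj (\<Prod>j<k. g (L j) (sw1 y' y j)))"
    by (simp add: prod.distrib cnj_prod)
  finally show ?thesis .
qed

definition Bk :: "nat \<Rightarrow> (nat \<Rightarrow> nat \<Rightarrow> bool \<Rightarrow> (nat \<Rightarrow> bool) \<Rightarrow> complex) \<Rightarrow> nat \<Rightarrow> (nat \<Rightarrow> bool) \<Rightarrow> (nat \<Rightarrow> nat \<Rightarrow> bool) \<Rightarrow> complex" where
  "Bk n A r x y = (\<Prod>i<n - 1. A r (Suc i) (x (Suc i)) (reg y (Suc i)))"

lemma kraus_split: "0 < n \<Longrightarrow> kraus_el n A r x y = A r 0 (x 0) (reg y 0) * Bk n A r x y"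
  unfolding kraus_el_def Bk_def
  by (cases n) (simp_all add: prod.lessThan_Suc_shift del: prod.lessThan_Suc)

lemma reg_sw1_0: "reg (sw1 y y') 0 = reg y' 0"
  by (simp add: reg_def sw1_def)

lemma Bk_sw1: "Bk n A r (x(0 := v)) (sw1 y y') = Bk n A r x y"
  by (simp add: Bk_def reg_def sw1_def)

definition hv :: "nat \<Rightarrow> nat \<Rightarrow> (nat \<Rightarrow> nat \<Rightarrow> bool \<Rightarrow> (nat \<Rightarrow> bool) \<Rightarrow> complex) \<Rightarrow> ('l \<Rightarrow> (nat \<Rightarrow> bool) \<Rightarrow> complex) \<Rightarrow> nat \<Rightarrow> (nat \<Rightarrow> 'l) \<Rightarrow> (nat \<Rightarrow> bool) \<Rightarrow> complex" where
  "hv n k A g r L x = (\<Sum>y\<in>cfgs n k. cnj (A r 0 (x 0) (reg y 0)) * Bk n A r x y * (\<Prod>j<k. g (L j) (y j)))"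

lemma slocc_pt:
  assumes n: "0 < n" and fin: "finite Ls"
    and hr: "\<forall>u\<in>qbits n. \<forall>u'\<in>qbits n. \<rho> u u' =
       (\<Sum>l\<in>Ls. complex_of_real (c l) * g l (u(0 := u' 0)) * cnj (g l (u'(0 := u 0))))"
  shows "slocc_out n k m A \<rho> (x(0 := x' 0)) (x'(0 := x 0)) =
    (\<Sum>r<m. \<Sum>L\<in>PiE {..<k} (\<lambda>_. Ls). complex_of_real (\<Prod>j<k. c (L j)) *
       hv n k A g r L x * cnj (hv n k A g r L x'))"
  unfolding slocc_out_def hv_def
proof (rule sum.cong[OF refl])
  fix r
  let ?G = "\<lambda>L y. \<Prod>j<k. g (L j) (y j)"
  let ?H = "\<lambda>L x y. cnj (A r 0 (x 0) (reg y 0)) * Bk n A r x y * ?G L y"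
  have "(\<Sum>y\<in>cfgs n k. \<Sum>y'\<in>cfgs n k. kraus_el n A r (x(0 := x' 0)) y * tpow \<rho> k y y' * cnj (kraus_el n A r (x'(0 := x 0)) y'))
      = (\<Sum>y\<in>cfgs n k. \<Sum>y'\<in>cfgs n k. kraus_el n A r (x(0 := x' 0)) (sw1 y y') * tpow \<rho> k (sw1 y y') (sw1 y' y) * cnj (kraus_el n A r (x'(0 := x 0)) (sw1 y' y)))"
    by (rule sum_swap_cfgs[OF n])
  also have "\<dots> = (\<Sum>y\<in>cfgs n k. \<Sum>y'\<in>cfgs n k. \<Sum>L\<in>PiE {..<k} (\<lambda>_. Ls). complex_of_real (\<Prod>j<k. c (L j)) * ?H L x y * cnj (?H L x' y'))"
  proof (intro sum.cong refl)
    fix y y' assume y: "y \<in> cfgs n k" and y': "y' \<in> cfgs n k"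
    have t: "tpow \<rho> k (sw1 y y') (sw1 y' y) = (\<Sum>L\<in>PiE {..<k} (\<lambda>_. Ls).
      complex_of_real (\<Prod>j<k. c (L j)) * ?G L y * cnj (?G L y'))"
      using tpow_gram[OF fin hr sw1_cfgs[OF n y y'] sw1_cfgs[OF n y' y]] by (simp add: sw1_invol)
    show "kraus_el n A r (x(0 := x' 0)) (sw1 y y') * tpow \<rho> k (sw1 y y') (sw1 y' y) * cnj (kraus_el n A r (x'(0 := x 0)) (sw1 y' y))
      = (\<Sum>L\<in>PiE {..<k} (\<lambda>_. Ls). complex_of_real (\<Prod>j<k. c (L j)) * ?H L x y * cnj (?H L x' y'))"
      unfolding t kraus_split[OF n] reg_sw1_0 Bk_sw1
      by (simp add: sum_distrib_left sum_distrib_right mult_ac)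
  qed
  also have "\<dots> = (\<Sum>L\<in>PiE {..<k} (\<lambda>_. Ls). complex_of_real (\<Prod>j<k. c (L j)) *
       (\<Sum>y\<in>cfgs n k. ?H L x y) * cnj (\<Sum>y\<in>cfgs n k. ?H L x' y))"
  proof -
    have "(\<Sum>y\<in>cfgs n k. \<Sum>y'\<in>cfgs n k. \<Sum>L\<in>PiE {..<k} (\<lambda>_. Ls). complex_of_real (\<Prod>j<k. c (L j)) * ?H L x y * cnj (?H L x' y'))
      = (\<Sum>y\<in>cfgs n k. \<Sum>L\<in>PiE {..<k} (\<lambda>_. Ls). \<Sum>y'\<in>cfgs n k. complex_of_real (\<Prod>j<k. c (L j)) * ?H L x y * cnj (?H L x' y'))"
      by (rule sum.cong[OF refl], rule sum.swap)
    also have "\<dots> = (\<Sum>L\<in>PiE {..<k} (\<lambda>_. Ls). \<Sum>y\<in>cfgs n k. \<Sum>y'\<in>cfgs n k. complex_of_real (\<Prod>j<k. c (L j)) * ?H L x y * cnj (?H L x' y'))"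
      by (rule sum.swap)
    also have "\<dots> = (\<Sum>L\<in>PiE {..<k} (\<lambda>_. Ls). complex_of_real (\<Prod>j<k. c (L j)) *
       (\<Sum>y\<in>cfgs n k. ?H L x y) * cnj (\<Sum>y\<in>cfgs n k. ?H L x' y))"
      by (simp only: cnj_sum sum_distrib_left sum_distrib_right) (rule sum.cong[OF refl], rule sum.swap)
    finally show ?thesis .
  qed
  finally show "(\<Sum>y\<in>cfgs n k. \<Sum>y'\<in>cfgs n k. kraus_el n A r (x(0 := x' 0)) y * tpow \<rho> k y y' * cnj (kraus_el n A r (x'(0 := x 0)) y'))
     = (\<Sum>L\<in>PiE {..<k} (\<lambda>_. Ls). complex_of_real (\<Prod>j<k. c (L j)) *
       (\<Sum>y\<in>cfgs n k. ?H L x y) * cnj (\<Sum>y\<in>cfgs n k. ?H L x' y))" .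
qed

lemma sum4_swap:
  "(\<Sum>x\<in>X. \<Sum>x'\<in>X'. \<Sum>r\<in>R. \<Sum>L\<in>S. f x x' r L) = (\<Sum>r\<in>R. \<Sum>L\<in>S. \<Sum>x\<in>X. \<Sum>x'\<in>X'. f x x' r L)"
proof -
  have "(\<Sum>x\<in>X. \<Sum>x'\<in>X'. \<Sum>r\<in>R. \<Sum>L\<in>S. f x x' r L) = (\<Sum>x\<in>X. \<Sum>r\<in>R. \<Sum>L\<in>S. \<Sum>x'\<in>X'. f x x' r L)"
  proof (rule sum.cong[OF refl])
    fix x
    have "(\<Sum>x'\<in>X'. \<Sum>r\<in>R. \<Sum>L\<in>S. f x x' r L) = (\<Sum>r\<in>R. \<Sum>x'\<in>X'. \<Sum>L\<in>S. f x x' r L)"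
      by (rule sum.swap)
    also have "\<dots> = (\<Sum>r\<in>R. \<Sum>L\<in>S. \<Sum>x'\<in>X'. f x x' r L)"
      by (rule sum.cong[OF refl], rule sum.swap)
    finally show "(\<Sum>x'\<in>X'. \<Sum>r\<in>R. \<Sum>L\<in>S. f x x' r L) = (\<Sum>r\<in>R. \<Sum>L\<in>S. \<Sum>x'\<in>X'. f x x' r L)" .
  qed
  also have "\<dots> = (\<Sum>r\<in>R. \<Sum>x\<in>X. \<Sum>L\<in>S. \<Sum>x'\<in>X'. f x x' r L)"
    by (rule sum.swap)
  also have "\<dots> = (\<Sum>r\<in>R. \<Sum>L\<in>S. \<Sum>x\<in>X. \<Sum>x'\<in>X'. f x x' r L)"
    by (rule sum.cong[OF refl], rule sum.swap)
  finally show ?thesis .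
qed

lemma ppt_quad:
  assumes n: "0 < n" and fin: "finite Ls"
    and hr: "\<forall>u\<in>qbits n. \<forall>u'\<in>qbits n. \<rho> u u' =
       (\<Sum>l\<in>Ls. complex_of_real (c l) * g l (u(0 := u' 0)) * cnj (g l (u'(0 := u 0))))"
    and c: "\<forall>l. 0 \<le> c l"
  shows "0 \<le> Re (\<Sum>x\<in>qbits n. \<Sum>x'\<in>qbits n. cnj (v x) * slocc_out n k m A \<rho> (x(0 := x' 0)) (x'(0 := x 0)) * v x')"
proof -
  let ?h = "hv n k A g"
  define C where "C L = (\<Prod>j<k. c (L j))" for L :: "nat \<Rightarrow> 'a"
  let ?P = "PiE {..<k} (\<lambda>_. Ls)"
  have "(\<Sum>x\<in>qbits n. \<Sum>x'\<in>qbits n. cnj (v x) * slocc_out n k m A \<rho> (x(0 := x' 0)) (x'(0 := x 0)) * v x')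
     = (\<Sum>x\<in>qbits n. \<Sum>x'\<in>qbits n. \<Sum>r<m. \<Sum>L\<in>?P.
          complex_of_real (C L) * (cnj (v x) * ?h r L x) * cnj (cnj (v x') * ?h r L x'))"
  proof (intro sum.cong[OF refl])
    fix x x'
    show "cnj (v x) * slocc_out n k m A \<rho> (x(0 := x' 0)) (x'(0 := x 0)) * v x' = (\<Sum>r<m. \<Sum>L\<in>?P.
          complex_of_real (C L) * (cnj (v x) * ?h r L x) * cnj (cnj (v x') * ?h r L x'))"
      unfolding slocc_pt[OF n fin hr] C_def sum_distrib_left sum_distrib_right
      by (simp add: mult_ac)
  qed
  also have "\<dots> = (\<Sum>r<m. \<Sum>L\<in>?P. \<Sum>x\<in>qbits n. \<Sum>x'\<in>qbits n.
          complex_of_real (C L) * (cnj (v x) * ?h r L x) * cnj (cnj (v x') * ?h r L x'))"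
    by (rule sum4_swap)
  also have "\<dots> = (\<Sum>r<m. \<Sum>L\<in>?P.
          complex_of_real (C L) * (\<Sum>x\<in>qbits n. cnj (v x) * ?h r L x) * cnj (\<Sum>x\<in>qbits n. cnj (v x) * ?h r L x))"
    by (simp only: cnj_sum sum_distrib_left sum_distrib_right) (rule sum.cong[OF refl], rule sum.cong[OF refl], rule sum.swap)
  also have "\<dots> = (\<Sum>r<m. \<Sum>L\<in>?P.
          complex_of_real (C L * (cmod (\<Sum>x\<in>qbits n. cnj (v x) * ?h r L x))\<^sup>2))"
    by (simp only: mult.assoc of_real_mult complex_norm_square)
  also have "\<dots> = complex_of_real (\<Sum>r<m. \<Sum>L\<in>?P. C L * (cmod (\<Sum>x\<in>qbits n. cnj (v x) * ?h r L x))\<^sup>2)"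
    by (simp only: of_real_sum)
  finally have eq: "(\<Sum>x\<in>qbits n. \<Sum>x'\<in>qbits n. cnj (v x) * slocc_out n k m A \<rho> (x(0 := x' 0)) (x'(0 := x 0)) * v x')
     = complex_of_real (\<Sum>r<m. \<Sum>L\<in>?P. C L * (cmod (\<Sum>x\<in>qbits n. cnj (v x) * ?h r L x))\<^sup>2)" .
  have "0 \<le> (\<Sum>r<m. \<Sum>L\<in>?P. C L * (cmod (\<Sum>x\<in>qbits n. cnj (v x) * ?h r L x))\<^sup>2)"
    by (intro sum_nonneg mult_nonneg_nonneg) (auto simp: C_def c prod_nonneg)
  then show ?thesis unfolding eq by simp
qed

lemma sumB: "(\<Sum>a\<in>(UNIV::bool set). f a) = f True + f False"
  by (simp add: UNIV_bool add.commute)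

lemma lcX: "local_conj pauliX i \<rho> x x' = \<rho> (x(i := \<not> x i)) (x'(i := \<not> x' i))"
  unfolding local_conj_def pauliX_def sumB
  by (cases "x i"; cases "x' i") simp_all

lemma lcY: "local_conj pauliY i \<rho> x x' = (if x i = x' i then 1 else -1) * \<rho> (x(i := \<not> x i)) (x'(i := \<not> x' i))"
  unfolding local_conj_def pauliY_def sumB
  by (cases "x i"; cases "x' i") (simp_all add: algebra_simps)

lemma lcZ: "local_conj pauliZ i \<rho> x x' = (if x i = x' i then 1 else -1) * \<rho> x x'"
  unfolding local_conj_def pauliZ_def sumB
  by (cases "x i"; cases "x' i") (simp_all add: fun_upd_idem)

lemma depol_eq: "depol p i \<rho> x x' =
  (if x i = x' i then complex_of_real (1 - 2*p/3) * \<rho> x x' + complex_of_real (2*p/3) * \<rho> (x(i := \<not> x i)) (x'(i := \<not> x' i))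
   else complex_of_real (1 - 4*p/3) * \<rho> x x')"
  unfolding depol_def lcX lcY lcZ
  by (simp add: algebra_simps)

definition b3 :: "bool \<Rightarrow> bool \<Rightarrow> bool \<Rightarrow> nat \<Rightarrow> bool" where
  "b3 a b c = (\<lambda>i. if i = 0 then a else if i = 1 then b else if i = 2 then c else False)"

lemma b3_app[simp]: "b3 a b c 0 = a" "b3 a b c 1 = b" "b3 a b c 2 = c" "b3 a b c (Suc (Suc (Suc i))) = False" "b3 a b c (Suc 0) = b"
  by (simp_all add: b3_def)

lemma b3_upd[simp]: "(b3 a b c)(0 := v) = b3 v b c" "(b3 a b c)(1 := v) = b3 a v c" "(b3 a b c)(2 := v) = b3 a b v" "(b3 a b c)(Suc 0 := v) = b3 a v c"
  by (auto simp: b3_def fun_eq_iff)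

lemma b3_qbits: "x \<in> qbits 3 \<Longrightarrow> x = b3 (x 0) (x 1) (x 2)"
  by (auto simp: qbits_def b3_def fun_eq_iff)

lemma b3_in: "b3 a b c \<in> qbits 3"
  by (auto simp: qbits_def b3_def)

lemma b3_inj: "b3 a b c = b3 a' b' c' \<longleftrightarrow> a = a' \<and> b = b' \<and> c = c'"
proof
  assume e: "b3 a b c = b3 a' b' c'"
  have "b3 a b c 0 = b3 a' b' c' 0" "b3 a b c 1 = b3 a' b' c' 1" "b3 a b c 2 = b3 a' b' c' 2" using e by simp_all
  then show "a = a' \<and> b = b' \<and> c = c'" by simp
qed simp

lemma qbits3_img: "qbits 3 = (\<lambda>(a, b, c). b3 a b c) ` UNIV"
proof
  show "qbits 3 \<subseteq> (\<lambda>(a, b, c). b3 a b c) ` UNIV"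
  proof
    fix x assume "x \<in> qbits 3"
    then show "x \<in> (\<lambda>(a, b, c). b3 a b c) ` UNIV"
      by (intro image_eqI[where x="(x 0, x 1, x 2)"]) (simp_all, rule b3_qbits[simplified])
  qed
qed (auto simp: b3_in)

lemma sum_qbits3: "(\<Sum>x\<in>qbits 3. f x) =
   f (b3 False False False) + f (b3 False False True) + f (b3 False True False) + f (b3 False True True) +
   f (b3 True False False) + f (b3 True False True) + f (b3 True True False) + f (b3 True True True)"
proof -
  have inj: "inj (\<lambda>(a, b, c). b3 a b c)"
    by (auto simp: inj_def b3_inj)
  have "(\<Sum>x\<in>qbits 3. f x) = (\<Sum>z\<in>UNIV. f (case z of (a, b, c) \<Rightarrow> b3 a b c))"
    unfolding qbits3_img by (subst sum.reindex[OF inj]) (simp add: comp_def)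
  also have "(UNIV::(bool \<times> bool \<times> bool) set) = {(False,False,False), (False,False,True), (False,True,False), (False,True,True),
     (True,False,False), (True,False,True), (True,True,False), (True,True,True)}"
    by auto
  finally show ?thesis by (simp add: algebra_simps)
qed

lemma all_qbits3: "(\<forall>x\<in>qbits 3. P x) \<longleftrightarrow> (\<forall>a b c. P (b3 a b c))"
  using b3_qbits b3_in by metis


definition sg3 :: "(nat \<Rightarrow> bool) \<Rightarrow> complex" where
  "sg3 x = (if (x 0 \<and> x 1) = (x 1 \<and> x 2) then 1 else -1)"

definition Qf :: "nat \<Rightarrow> op \<Rightarrow> vec \<Rightarrow> complex" where
  "Qf n \<sigma> v = (\<Sum>x\<in>qbits n. \<Sum>x'\<in>qbits n. cnj (v x) * \<sigma> (x(0 := x' 0)) (x'(0 := x 0)) * v x')"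

definition uz :: "bool \<Rightarrow> bool \<Rightarrow> bool \<Rightarrow> vec" where
  "uz z0 z1 z2 x = (if (z0 \<and> x 0) = ((z1 \<and> x 1) = (z2 \<and> x 2)) then -1 else 1) * sg3 x"

lemma key3: "8 * trace_op 3 \<sigma> - 2 * (\<Sum>x\<in>qbits 3. \<Sum>x'\<in>qbits 3. sg3 x * \<sigma> x x' * sg3 x') =
   (Qf 3 \<sigma> (uz False False True) + Qf 3 \<sigma> (uz False True True) + Qf 3 \<sigma> (uz True False True)
    + Qf 3 \<sigma> (uz True True True) + 2 * Qf 3 \<sigma> (uz True True False))"
  unfolding trace_op_def Qf_def sum_qbits3
  by (simp add: uz_def sg3_def algebra_simps)


lemma sum_U3: "(\<Sum>z\<in>(UNIV::(bool \<times> bool \<times> bool) set). f z) =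
   f (False, False, False) + f (False, False, True) + f (False, True, False) + f (False, True, True) +
   f (True, False, False) + f (True, False, True) + f (True, True, False) + f (True, True, True)"
proof -
  have e: "(UNIV::(bool \<times> bool \<times> bool) set) = {(False,False,False), (False,False,True), (False,True,False), (False,True,True),
     (True,False,False), (True,False,True), (True,True,False), (True,True,True)}"
    by auto
  show ?thesis by (subst e) (simp add: algebra_simps)
qed

lemma stab_sets: "{j. j < 3 \<and> path_graph 0 j} = {1}" "{j. j < 3 \<and> path_graph 1 j} = {0, 2}"
   "{j. j < 3 \<and> path_graph 2 j} = {1}" "{j. j < 3 \<and> path_graph (Suc 0) j} = {0, 2}"
  by (auto simp: path_graph_def)

lemma graph_psi:
  assumes "is_graph_state path_graph 3 \<psi>"
  shows "\<forall>x\<in>qbits 3. \<psi> x = sg3 x * \<psi> (b3 False False False)"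
    and "(cmod (\<psi> (b3 False False False)))\<^sup>2 = 1/8"
proof -
  have st: "\<forall>i<3. \<forall>x\<in>qbits 3. stab_gen path_graph 3 i \<psi> x = \<psi> x" and nm: "normalized 3 \<psi>"
    using assms by (auto simp: is_graph_state_def)
  have E0: "(if b then -1 else 1) * \<psi> (b3 (\<not> a) b c) = \<psi> (b3 a b c)" for a b c
    using st[rule_format, of 0 "b3 a b c"] by (simp add: stab_gen_def stab_sets b3_in)
  have E1: "(if a then -1 else 1) * (if c then -1 else 1) * \<psi> (b3 a (\<not> b) c) = \<psi> (b3 a b c)" for a b c
    using st[rule_format, of 1 "b3 a b c"] by (simp add: stab_gen_def stab_sets b3_in)
  have E2: "(if b then -1 else 1) * \<psi> (b3 a b (\<not> c)) = \<psi> (b3 a b c)" for a b c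
    using st[rule_format, of 2 "b3 a b c"] by (simp add: stab_gen_def stab_sets b3_in)
  let ?c = "\<psi> (b3 False False False)"
  have v1: "\<psi> (b3 True False False) = ?c" using E0[where a=False and b=False and c=False] by simp
  have v2: "\<psi> (b3 False False True) = ?c" using E2[where a=False and b=False and c=False] by simp
  have v3: "\<psi> (b3 True False True) = ?c" using E2[where a=True and b=False and c=False] v1 by simp
  have v4: "\<psi> (b3 False True False) = ?c" using E1[where a=False and b=False and c=False] by simp
  have "- \<psi> (b3 True True False) = ?c" using E0[where a=False and b=True and c=False] v4 by simp
  then have v5: "\<psi> (b3 True True False) = - ?c" by (metis minus_minus)
  have "- \<psi> (b3 False True True) = ?c" using E2[where a=False and b=True and c=False] v4 by simp
  then have v6: "\<psi> (b3 False True True) = - ?c" by (metis minus_minus)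
  have "- \<psi> (b3 True True True) = - ?c" using E0[where a=False and b=True and c=True] v6 by simp
  then have v7: "\<psi> (b3 True True True) = ?c" by simp
  note v = v1 v2 v3 v4 v5 v6 v7
  show A: "\<forall>x\<in>qbits 3. \<psi> x = sg3 x * ?c"
    unfolding all_qbits3
  proof (intro allI)
    fix a b c show "\<psi> (b3 a b c) = sg3 (b3 a b c) * ?c"
      by (cases a; cases b; cases c) (simp_all add: v sg3_def)
  qed
  have "(\<Sum>x\<in>qbits 3. (cmod (\<psi> x))\<^sup>2) = 1" using nm by (simp add: normalized_def)
  then have "8 * (cmod ?c)\<^sup>2 = 1" unfolding sum_qbits3 by (simp add: v norm_minus_cancel)
  then show "(cmod ?c)\<^sup>2 = 1/8" by simp
qed


definition cz :: "real \<Rightarrow> bool \<times> bool \<times> bool \<Rightarrow> real" where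
  "cz p z = (let A = (if fst z then -1 else 1); B = (if fst (snd z) then -1 else 1); C = (if snd (snd z) then -1 else 1);
     \<nu> = 1 - 4*p/3 in (1 + \<nu>^2 * (A + C + A*C) + \<nu>^3 * B * (1 + C) * (1 - A)) / 64)"

definition gz :: "bool \<times> bool \<times> bool \<Rightarrow> vec" where
  "gz z = uz (fst z) (fst (snd z)) (snd (snd z))"

lemma proj3:
  assumes "is_graph_state path_graph 3 \<psi>"
  shows "proj \<psi> (b3 a b c) (b3 a' b' c') = sg3 (b3 a b c) * sg3 (b3 a' b' c') / 8"
proof -
  note g = graph_psi[OF assms]
  have "\<psi> (b3 False False False) * cnj (\<psi> (b3 False False False)) = 1/8"
  proof -
    have "\<psi> (b3 False False False) * cnj (\<psi> (b3 False False False)) = complex_of_real ((cmod (\<psi> (b3 False False False)))\<^sup>2)"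
      by (simp only: complex_norm_square)
    also have "\<dots> = 1/8" unfolding g(2) by simp
    finally show ?thesis .
  qed
  moreover have "cnj (sg3 x) = sg3 x" for x by (simp add: sg3_def)
  moreover have "\<psi> (b3 a b c) = sg3 (b3 a b c) * \<psi> (b3 False False False)" using g(1) b3_in by blast
  moreover have "\<psi> (b3 a' b' c') = sg3 (b3 a' b' c') * \<psi> (b3 False False False)" using g(1) b3_in by blast
  ultimately show ?thesis
    unfolding proj_def by (simp add: ac_simps)
qed

lemma rho3_gram:
  assumes "is_graph_state path_graph 3 \<psi>"
  shows "\<forall>u\<in>qbits 3. \<forall>u'\<in>qbits 3. depol_all p 3 (proj \<psi>) u u' =
    (\<Sum>z\<in>UNIV. complex_of_real (cz p z) * gz z (u(0 := u' 0)) * cnj (gz z (u'(0 := u 0))))"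
  unfolding all_qbits3
proof (intro allI)
  fix a b c a' b' c'
  have d: "depol_all p 3 \<rho> = depol p 2 (depol p 1 (depol p 0 \<rho>))" for \<rho>
    by (simp add: eval_nat_numeral)
  show "depol_all p 3 (proj \<psi>) (b3 a b c) (b3 a' b' c') =
    (\<Sum>z\<in>UNIV. complex_of_real (cz p z) * gz z ((b3 a b c)(0 := b3 a' b' c' 0)) * cnj (gz z ((b3 a' b' c')(0 := b3 a b c 0))))"
    unfolding d sum_U3
    apply (cases a; cases b; cases c; cases a'; cases b'; cases c')
    apply (simp_all add: depol_eq proj3[OF assms] gz_def uz_def sg3_def cz_def Let_def field_simps)
    apply (simp_all add: algebra_simps power2_eq_square power3_eq_cube)
    done
qed

lemma cz_nonneg:
  assumes p0: "0 \<le> p" and p1: "p \<le> 1" and cub: "27 - 126 * p + 156 * p ^ 2 - 64 * p ^ 3 \<le> 0"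
  shows "0 \<le> cz p z"
proof -
  define \<nu> where "\<nu> = 1 - 4*p/3"
  have n1: "\<nu> \<le> 1" and n2: "-1/3 \<le> \<nu>" using p0 p1 by (auto simp: \<nu>_def)
  have sq: "\<nu>^2 \<le> 1"
  proof (cases "0 \<le> \<nu>")
    case True then show ?thesis using n1 by (simp add: power_le_one)
  next
    case False
    then have "(-\<nu>)^2 \<le> 1" using n2 by (intro power_le_one) auto
    then show ?thesis by simp
  qed
  have c1: "0 \<le> 1 - \<nu>^2 - 4*\<nu>^3"
  proof -
    have "1 - \<nu>^2 - 4*\<nu>^3 = -(4/27) * (27 - 126 * p + 156 * p ^ 2 - 64 * p ^ 3)"
      unfolding \<nu>_def by (simp add: power2_eq_square power3_eq_cube field_simps)
    then show ?thesis using cub by simp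
  qed
  have c2: "0 \<le> 1 - \<nu>^2 + 4*\<nu>^3"
  proof (cases "0 \<le> \<nu>")
    case True then show ?thesis using sq by simp
  next
    case False
    then have a: "0 < -\<nu>" "-\<nu> \<le> 1/3" using n2 by auto
    have "(-\<nu>)^2 \<le> (1/3)^2" using a by (intro power_mono) auto
    moreover have "(-\<nu>)^3 \<le> (1/3)^3" using a by (intro power_mono) auto
    ultimately have "\<nu>^2 \<le> 1/9" "-(\<nu>^3) \<le> 1/27" by (simp_all add: power2_eq_square power3_eq_cube)
    then show ?thesis by simp
  qed
  obtain z0 z1 z2 where z: "z = (z0, z1, z2)" by (cases z) auto
  show ?thesis
    using sq c1 c2 unfolding z cz_def Let_def \<nu>_def[symmetric]
    by (cases z0; cases z1; cases z2) (simp_all add: algebra_simps)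
qed

lemma overlap3:
  assumes "is_graph_state path_graph 3 \<psi>"
  shows "overlap 3 \<psi> \<sigma> = (\<Sum>x\<in>qbits 3. \<Sum>x'\<in>qbits 3. sg3 x * \<sigma> x x' * sg3 x') / 8"
proof -
  note g = graph_psi[OF assms]
  let ?c = "\<psi> (b3 False False False)"
  have cc: "cnj ?c * ?c = 1/8"
  proof -
    have "cnj ?c * ?c = complex_of_real ((cmod ?c)\<^sup>2)"
      by (simp only: complex_norm_square mult.commute)
    also have "\<dots> = 1/8" unfolding g(2) by simp
    finally show ?thesis .
  qed
  have cs: "cnj (sg3 x) = sg3 x" for x by (simp add: sg3_def)
  have "overlap 3 \<psi> \<sigma> = (\<Sum>x\<in>qbits 3. \<Sum>x'\<in>qbits 3. (cnj ?c * ?c) * (sg3 x * \<sigma> x x' * sg3 x'))"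
    unfolding overlap_def
  proof (intro sum.cong refl)
    fix x x' assume x: "x \<in> qbits 3" and x': "x' \<in> qbits 3"
    have "\<psi> x = sg3 x * ?c" "\<psi> x' = sg3 x' * ?c" using g(1) x x' by blast+
    then show "cnj (\<psi> x) * \<sigma> x x' * \<psi> x' = (cnj ?c * ?c) * (sg3 x * \<sigma> x x' * sg3 x')"
      by (simp add: cs ac_simps)
  qed
  also have "\<dots> = (\<Sum>x\<in>qbits 3. \<Sum>x'\<in>qbits 3. sg3 x * \<sigma> x x' * sg3 x') / 8"
    unfolding cc by (simp add: sum_divide_distrib)
  finally show ?thesis .
qed

lemma part1:
  assumes p0: "0 \<le> p" and p1: "p \<le> 1" and cub: "27 - 126 * p + 156 * p ^ 2 - 64 * p ^ 3 \<le> 0"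
    and gs: "is_graph_state path_graph 3 \<psi>"
  shows "\<not> purifiable 3 (depol_all p 3 (proj \<psi>)) \<psi>"
proof
  assume pur: "purifiable 3 (depol_all p 3 (proj \<psi>)) \<psi>"
  have "\<exists>k m A. 0 < k \<and> 0 < Re (trace_op 3 (slocc_out 3 k m A (depol_all p 3 (proj \<psi>)))) \<and>
     Re (overlap 3 \<psi> (slocc_out 3 k m A (depol_all p 3 (proj \<psi>)))) \<ge> (1 - 1/4) * Re (trace_op 3 (slocc_out 3 k m A (depol_all p 3 (proj \<psi>))))"
    using pur unfolding purifiable_def by (erule_tac x="1/4" in allE) simp
  then obtain k m A where tr: "0 < Re (trace_op 3 (slocc_out 3 k m A (depol_all p 3 (proj \<psi>))))"
    and ov: "Re (overlap 3 \<psi> (slocc_out 3 k m A (depol_all p 3 (proj \<psi>)))) \<ge> (1 - 1/4) * Re (trace_op 3 (slocc_out 3 k m A (depol_all p 3 (proj \<psi>))))"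
    by blast
  define \<sigma> where "\<sigma> = slocc_out 3 k m A (depol_all p 3 (proj \<psi>))"
  have Q: "0 \<le> Re (Qf 3 \<sigma> v)" for v
    unfolding Qf_def \<sigma>_def
    by (rule ppt_quad[where Ls=UNIV and c="cz p" and g=gz]) (auto simp: rho3_gram[OF gs] cz_nonneg[OF p0 p1 cub])
  have "Re (8 * trace_op 3 \<sigma> - 2 * (\<Sum>x\<in>qbits 3. \<Sum>x'\<in>qbits 3. sg3 x * \<sigma> x x' * sg3 x')) \<ge> 0"
    unfolding key3 using Q[of "uz False False True"] Q[of "uz False True True"] Q[of "uz True False True"]
      Q[of "uz True True True"] Q[of "uz True True False"] by simp
  then have "Re (overlap 3 \<psi> \<sigma>) \<le> Re (trace_op 3 \<sigma>) / 2"
    unfolding overlap3[OF gs] by simp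
  then show False using tr ov unfolding \<sigma>_def[symmetric] by simp
qed

definition b2 :: "bool \<Rightarrow> bool \<Rightarrow> nat \<Rightarrow> bool" where
  "b2 a b = (\<lambda>i. if i = 0 then a else if i = 1 then b else False)"

lemma b2_app[simp]: "b2 a b 0 = a" "b2 a b 1 = b" "b2 a b (Suc 0) = b" "b2 a b (Suc (Suc i)) = False"
  by (simp_all add: b2_def)

lemma b2_upd[simp]: "(b2 a b)(0 := v) = b2 v b" "(b2 a b)(1 := v) = b2 a v" "(b2 a b)(Suc 0 := v) = b2 a v"
  by (auto simp: b2_def fun_eq_iff)

lemma b2_qbits: "x \<in> qbits 2 \<Longrightarrow> x = b2 (x 0) (x 1)"
  by (auto simp: qbits_def b2_def fun_eq_iff)

lemma b2_in: "b2 a b \<in> qbits 2"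
  by (auto simp: qbits_def b2_def)

lemma b2_inj: "b2 a b = b2 a' b' \<longleftrightarrow> a = a' \<and> b = b'"
proof
  assume e: "b2 a b = b2 a' b'"
  have "b2 a b 0 = b2 a' b' 0" "b2 a b 1 = b2 a' b' 1" using e by simp_all
  then show "a = a' \<and> b = b'" by simp
qed simp

lemma qbits2_img: "qbits 2 = (\<lambda>(a, b). b2 a b) ` UNIV"
proof
  show "qbits 2 \<subseteq> (\<lambda>(a, b). b2 a b) ` UNIV"
  proof
    fix x assume "x \<in> qbits 2"
    then show "x \<in> (\<lambda>(a, b). b2 a b) ` UNIV"
      by (intro image_eqI[where x="(x 0, x 1)"]) (simp_all, rule b2_qbits[simplified])
  qed
qed (auto simp: b2_in)

lemma sum_qbits2: "(\<Sum>x\<in>qbits 2. f x) = f (b2 False False) + f (b2 False True) + f (b2 True False) + f (b2 True True)"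
proof -
  have inj: "inj (\<lambda>(a, b). b2 a b)"
    by (auto simp: inj_def b2_inj)
  have "(\<Sum>x\<in>qbits 2. f x) = (\<Sum>z\<in>UNIV. f (case z of (a, b) \<Rightarrow> b2 a b))"
    unfolding qbits2_img by (subst sum.reindex[OF inj]) (simp add: comp_def)
  also have "(UNIV::(bool \<times> bool) set) = {(False,False), (False,True), (True,False), (True,True)}"
    by auto
  finally show ?thesis by (simp add: algebra_simps)
qed

lemma sum_U2: "(\<Sum>z\<in>(UNIV::(bool \<times> bool) set). f z) = f (False, False) + f (False, True) + f (True, False) + f (True, True)"
proof -
  have e: "(UNIV::(bool \<times> bool) set) = {(False,False), (False,True), (True,False), (True,True)}"
    by auto
  show ?thesis by (subst e) (simp add: algebra_simps)
qed

lemma all_qbits2: "(\<forall>x\<in>qbits 2. P x) \<longleftrightarrow> (\<forall>a b. P (b2 a b))"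
  using b2_qbits b2_in by metis

definition FF :: "real \<Rightarrow> real" where "FF p = (1 - p)^2 + p^2/3"
definition qq :: "real \<Rightarrow> real" where "qq p = (1 - FF p) / 3"

lemma s2': "complex_of_real (sqrt 2) * complex_of_real (sqrt 2) = 2"
proof -
  have "complex_of_real (sqrt 2) * complex_of_real (sqrt 2) = complex_of_real (sqrt 2 * sqrt 2)"
    by (simp only: of_real_mult)
  also have "sqrt 2 * sqrt 2 = (2::real)" by simp
  finally show ?thesis by simp
qed

lemma s2: "complex_of_real (1 / sqrt 2) * complex_of_real (1 / sqrt 2) = 1/2"
  using s2' by (simp add: field_simps)

lemma projB: "proj bell (b2 a b) (b2 a' b') = (if a = b \<and> a' = b' then 1/2 else 0)"
  unfolding proj_def bell_def by (simp add: s2 s2')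

lemma rhoB: "depol_all p 2 (proj bell) (b2 a b) (b2 a' b') =
   complex_of_real ((if a = a' \<and> b = b' then qq p else 0) + (if a = b \<and> a' = b' then (FF p - qq p) / 2 else 0))"
proof -
  have d: "depol_all p 2 \<rho> = depol p 1 (depol p 0 \<rho>)" for \<rho>
    by (simp add: eval_nat_numeral)
  show ?thesis
    unfolding d
    apply (cases a; cases b; cases a'; cases b')
    apply (simp_all add: depol_eq projB FF_def qq_def field_simps)
    apply (simp_all add: algebra_simps power2_eq_square)
    done
qed


definition gb :: "bool \<times> bool \<Rightarrow> vec" where
  "gb l x = (if l = (False, False) then (if \<not> x 0 \<and> \<not> x 1 then 1 else 0)
     else if l = (True, True) then (if x 0 \<and> x 1 then 1 else 0)
     else if l = (False, True) then (if x 0 \<noteq> x 1 then 1 else 0)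
     else (if x 0 \<noteq> x 1 then (if x 0 then -1 else 1) else 0))"

definition cb :: "real \<Rightarrow> bool \<times> bool \<Rightarrow> real" where
  "cb p l = (if l = (False, True) then (FF p + qq p) / 4 else if l = (True, False) then (1 - 2 * FF p) / 4
     else (FF p + qq p) / 2)"

lemma rhoB_gram:
  "\<forall>u\<in>qbits 2. \<forall>u'\<in>qbits 2. depol_all p 2 (proj bell) u u' =
    (\<Sum>l\<in>UNIV. complex_of_real (cb p l) * gb l (u(0 := u' 0)) * cnj (gb l (u'(0 := u 0))))"
  unfolding all_qbits2
proof (intro allI)
  fix a b a' b'
  show "depol_all p 2 (proj bell) (b2 a b) (b2 a' b') =
    (\<Sum>l\<in>UNIV. complex_of_real (cb p l) * gb l ((b2 a b)(0 := b2 a' b' 0)) * cnj (gb l ((b2 a' b')(0 := b2 a b 0))))"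
    unfolding rhoB sum_U2
    apply (cases a; cases b; cases a'; cases b')
    apply (simp_all add: gb_def cb_def qq_def field_simps)
    done
qed

lemma key2: "trace_op 2 \<sigma> - 2 * overlap 2 bell \<sigma> = Qf 2 \<sigma> (gb (True, False))"
  unfolding trace_op_def overlap_def Qf_def sum_qbits2
  by (simp add: bell_def gb_def s2 algebra_simps) (simp add: s2')

lemma part2a:
  assumes p0: "0 \<le> p" and p1: "p \<le> 1" and F: "FF p \<le> 1/2"
  shows "\<not> purifiable 2 (depol_all p 2 (proj bell)) bell"
proof
  assume pur: "purifiable 2 (depol_all p 2 (proj bell)) bell"
  have "\<exists>k m A. 0 < k \<and> 0 < Re (trace_op 2 (slocc_out 2 k m A (depol_all p 2 (proj bell)))) \<and>
     Re (overlap 2 bell (slocc_out 2 k m A (depol_all p 2 (proj bell)))) \<ge> (1 - 1/4) * Re (trace_op 2 (slocc_out 2 k m A (depol_all p 2 (proj bell))))"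
    using pur unfolding purifiable_def by (erule_tac x="1/4" in allE) simp
  then obtain k m A where tr: "0 < Re (trace_op 2 (slocc_out 2 k m A (depol_all p 2 (proj bell))))"
    and ov: "Re (overlap 2 bell (slocc_out 2 k m A (depol_all p 2 (proj bell)))) \<ge> (1 - 1/4) * Re (trace_op 2 (slocc_out 2 k m A (depol_all p 2 (proj bell))))"
    by blast
  define \<sigma> where "\<sigma> = slocc_out 2 k m A (depol_all p 2 (proj bell))"
  have F0: "0 \<le> FF p" by (simp add: FF_def)
  have cnn: "\<forall>l. 0 \<le> cb p l" using F F0 by (auto simp: cb_def qq_def)
  have Q: "0 \<le> Re (Qf 2 \<sigma> v)" for v
    unfolding Qf_def \<sigma>_def
    by (rule ppt_quad[where Ls=UNIV and c="cb p" and g=gb]) (auto simp: rhoB_gram cnn)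
  have "Re (trace_op 2 \<sigma> - 2 * overlap 2 bell \<sigma>) \<ge> 0"
    unfolding key2 using Q by simp
  then have "Re (overlap 2 bell \<sigma>) \<le> Re (trace_op 2 \<sigma>) / 2"
    by simp
  then show False using tr ov unfolding \<sigma>_def[symmetric] by simp
qed

definition blk :: "nat \<Rightarrow> nat \<Rightarrow> (nat \<Rightarrow> nat \<Rightarrow> bool) \<Rightarrow> (nat \<Rightarrow> nat \<Rightarrow> bool)" where
  "blk b i y = (\<lambda>j. if j < b then y (i * b + j) else (\<lambda>_. False))"

definition joinc :: "nat \<Rightarrow> (nat \<Rightarrow> nat \<Rightarrow> bool) \<Rightarrow> (nat \<Rightarrow> nat \<Rightarrow> bool) \<Rightarrow> (nat \<Rightarrow> nat \<Rightarrow> bool)" where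
  "joinc k y w = (\<lambda>j. if j < k then y j else w (j - k))"

definition truncc :: "nat \<Rightarrow> (nat \<Rightarrow> nat \<Rightarrow> bool) \<Rightarrow> (nat \<Rightarrow> nat \<Rightarrow> bool)" where
  "truncc k y = (\<lambda>j. if j < k then y j else (\<lambda>_. False))"

definition shiftc :: "nat \<Rightarrow> nat \<Rightarrow> (nat \<Rightarrow> nat \<Rightarrow> bool) \<Rightarrow> (nat \<Rightarrow> nat \<Rightarrow> bool)" where
  "shiftc k b y = (\<lambda>j. if j < b then y (k + j) else (\<lambda>_. False))"

lemma sum_cfgs_split:
  "(\<Sum>y\<in>cfgs n (k + b). f y) = (\<Sum>y\<in>cfgs n k. \<Sum>w\<in>cfgs n b. f (joinc k y w))"
proof -
  have "(\<Sum>y\<in>cfgs n (k + b). f y) = (\<Sum>z\<in>cfgs n k \<times> cfgs n b. f (joinc k (fst z) (snd z)))"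
  proof (rule sum.reindex_bij_witness[where i="\<lambda>z. joinc k (fst z) (snd z)" and j="\<lambda>y. (truncc k y, shiftc k b y)"])
    fix z assume z: "z \<in> cfgs n k \<times> cfgs n b"
    then show "(truncc k (joinc k (fst z) (snd z)), shiftc k b (joinc k (fst z) (snd z))) = z"
      by (cases z) (auto simp: truncc_def shiftc_def joinc_def cfgs_def fun_eq_iff)
    show "joinc k (fst z) (snd z) \<in> cfgs n (k + b)"
      using z by (cases z) (auto simp: joinc_def cfgs_def)
  next
    fix y assume y: "y \<in> cfgs n (k + b)"
    have e: "joinc k (truncc k y) (shiftc k b y) = y"
      using y by (auto simp: truncc_def shiftc_def joinc_def cfgs_def fun_eq_iff)
    then show "joinc k (fst (truncc k y, shiftc k b y)) (snd (truncc k y, shiftc k b y)) = y" by simp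
    show "(truncc k y, shiftc k b y) \<in> cfgs n k \<times> cfgs n b"
      using y by (auto simp: truncc_def shiftc_def cfgs_def)
    show "f (joinc k (fst (truncc k y, shiftc k b y)) (snd (truncc k y, shiftc k b y))) = f y"
      using e by simp
  qed
  also have "\<dots> = (\<Sum>y\<in>cfgs n k. \<Sum>w\<in>cfgs n b. f (joinc k y w))"
    by (simp add: sum.cartesian_product case_prod_beta)
  finally show ?thesis .
qed

lemma blk_join1: "i < a \<Longrightarrow> blk b i (joinc (a * b) y w) = blk b i y"
proof -
  assume i: "i < a"
  have "i * b + j < a * b" if "j < b" for j
  proof -
    have "Suc i \<le> a" using i by simp
    then have "Suc i * b \<le> a * b" by (rule mult_le_mono1)
    then show ?thesis using that by simp
  qed
  then show ?thesis by (auto simp: blk_def joinc_def fun_eq_iff)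
qed

lemma blk_join2: "w \<in> cfgs n b \<Longrightarrow> blk b a (joinc (a * b) y w) = w"
  by (auto simp: blk_def joinc_def fun_eq_iff cfgs_def)

lemma sum_blocks:
  fixes F :: "nat \<Rightarrow> (nat \<Rightarrow> nat \<Rightarrow> bool) \<Rightarrow> complex"
  shows "(\<Sum>y\<in>cfgs n (a * b). \<Prod>i<a. F i (blk b i y)) = (\<Prod>i<a. \<Sum>w\<in>cfgs n b. F i w)"
proof (induction a)
  case 0
  have "cfgs n 0 = {\<lambda>_ _. False}" by (auto simp: cfgs_def fun_eq_iff)
  then show ?case by simp
next
  case (Suc a)
  have "(\<Sum>y\<in>cfgs n (Suc a * b). \<Prod>i<Suc a. F i (blk b i y))
     = (\<Sum>y\<in>cfgs n (a * b + b). \<Prod>i<Suc a. F i (blk b i y))"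
    by (simp add: add.commute)
  also have "\<dots> = (\<Sum>y\<in>cfgs n (a * b). \<Sum>w\<in>cfgs n b. \<Prod>i<Suc a. F i (blk b i (joinc (a * b) y w)))"
    by (rule sum_cfgs_split)
  also have "\<dots> = (\<Sum>y\<in>cfgs n (a * b). \<Sum>w\<in>cfgs n b. (\<Prod>i<a. F i (blk b i y)) * F a w)"
    by (intro sum.cong refl) (simp add: blk_join1 blk_join2)
  also have "\<dots> = (\<Sum>y\<in>cfgs n (a * b). \<Prod>i<a. F i (blk b i y)) * (\<Sum>w\<in>cfgs n b. F a w)"
    by (rule sum_product[symmetric])
  also have "\<dots> = (\<Prod>i<Suc a. \<Sum>w\<in>cfgs n b. F i w)"
    by (simp add: Suc.IH)
  finally show ?case .
qed

lemma tpow_blocks: "tpow \<rho> (a * b) y y' = (\<Prod>i<a. tpow \<rho> b (blk b i y) (blk b i y'))"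
proof -
  have "tpow \<rho> (a * b) y y' = (\<Prod>i<a. \<Prod>j\<in>{i * b..<i * b + b}. \<rho> (y j) (y' j))"
    unfolding tpow_def by (simp add: prod.nat_group)
  also have "\<dots> = (\<Prod>i<a. tpow \<rho> b (blk b i y) (blk b i y'))"
  proof (rule prod.cong[OF refl])
    fix i
    have "(\<Prod>j\<in>{0 + i * b..<b + i * b}. \<rho> (y j) (y' j)) = (\<Prod>j\<in>{0..<b}. \<rho> (y (j + i * b)) (y' (j + i * b)))"
      by (rule prod.shift_bounds_nat_ivl)
    then show "(\<Prod>j\<in>{i * b..<i * b + b}. \<rho> (y j) (y' j)) = tpow \<rho> b (blk b i y) (blk b i y')"
      by (simp add: tpow_def blk_def atLeast0LessThan add.commute)
  qed
  finally show ?thesis .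
qed

definition sgb :: "bool \<Rightarrow> complex" where "sgb s = (if s then -1 else 1)"

definition k1 :: "nat \<Rightarrow> bool \<Rightarrow> (nat \<Rightarrow> bool) \<Rightarrow> complex" where
  "k1 b s w = (if \<forall>j<b. w j = w 0 then sgb (s \<and> w 0) else 0)"

definition Aprot :: "nat \<Rightarrow> nat \<Rightarrow> nat \<Rightarrow> nat \<Rightarrow> bool \<Rightarrow> (nat \<Rightarrow> bool) \<Rightarrow> complex" where
  "Aprot a b r i t z = (\<Sum>s\<in>UNIV. sgb (s \<and> t) * (\<Prod>i'<a. k1 b s (\<lambda>j. z (i' * b + j))))"

definition k2 :: "nat \<Rightarrow> bool \<Rightarrow> bool \<Rightarrow> (nat \<Rightarrow> nat \<Rightarrow> bool) \<Rightarrow> complex" where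
  "k2 b s0 s1 w = k1 b s0 (\<lambda>j. w j 0) * k1 b s1 (\<lambda>j. w j 1)"

lemma k1_cong: assumes b: "0 < b" and e: "\<And>j. j < b \<Longrightarrow> w j = w' j" shows "k1 b s w = k1 b s w'"
proof -
  have 0: "w 0 = w' 0" using e b by blast
  have "(\<forall>j<b. w j = w 0) = (\<forall>j<b. w' j = w' 0)" using e 0 by auto
  then show ?thesis unfolding k1_def 0 by simp
qed

lemma cnj_sgb[simp]: "cnj (sgb s) = sgb s" by (simp add: sgb_def)
lemma cnj_k1[simp]: "cnj (k1 b s w) = k1 b s w" by (simp add: k1_def)
lemma cnj_k2[simp]: "cnj (k2 b s0 s1 w) = k2 b s0 s1 w" by (simp add: k2_def)

lemma kraus_prot:
  assumes b: "0 < b"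
  shows "kraus_el 2 (Aprot a b) 0 x y =
    (\<Sum>s0\<in>UNIV. \<Sum>s1\<in>UNIV. sgb (s0 \<and> x 0) * sgb (s1 \<and> x 1) * (\<Prod>i<a. k2 b s0 s1 (blk b i y)))"
proof -
  have e: "k1 b s (\<lambda>j. reg y c (i * b + j)) = k1 b s (\<lambda>j. blk b i y j c)" for s c i
    by (rule k1_cong[OF b]) (simp add: reg_def blk_def)
  have "kraus_el 2 (Aprot a b) 0 x y = Aprot a b 0 0 (x 0) (reg y 0) * Aprot a b 0 1 (x 1) (reg y 1)"
    by (simp add: kraus_el_def eval_nat_numeral)
  also have "\<dots> = (\<Sum>s0\<in>UNIV. sgb (s0 \<and> x 0) * (\<Prod>i<a. k1 b s0 (\<lambda>j. blk b i y j 0))) *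
                  (\<Sum>s1\<in>UNIV. sgb (s1 \<and> x 1) * (\<Prod>i<a. k1 b s1 (\<lambda>j. blk b i y j 1)))"
    by (simp only: Aprot_def e)
  also have "\<dots> = (\<Sum>s0\<in>UNIV. \<Sum>s1\<in>UNIV. sgb (s0 \<and> x 0) * sgb (s1 \<and> x 1) * (\<Prod>i<a. k2 b s0 s1 (blk b i y)))"
    unfolding sum_product k2_def prod.distrib by (simp add: ac_simps)
  finally show ?thesis .
qed


lemma kraus_prot2:
  assumes b: "0 < b"
  shows "kraus_el 2 (Aprot a b) 0 x y =
    (\<Sum>s\<in>UNIV. sgb (fst s \<and> x 0) * sgb (snd s \<and> x 1) * (\<Prod>i<a. k2 b (fst s) (snd s) (blk b i y)))"
  unfolding kraus_prot[OF b] UNIV_Times_UNIV[symmetric] sum.cartesian_product by (simp add: case_prod_beta)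

lemma sum2_blocks:
  fixes G :: "(nat \<Rightarrow> nat \<Rightarrow> bool) \<Rightarrow> (nat \<Rightarrow> nat \<Rightarrow> bool) \<Rightarrow> complex"
  shows "(\<Sum>y\<in>cfgs n (a * b). \<Sum>y'\<in>cfgs n (a * b). \<Prod>i<a. G (blk b i y) (blk b i y')) =
    (\<Sum>w\<in>cfgs n b. \<Sum>w'\<in>cfgs n b. G w w') ^ a"
proof -
  have "(\<Sum>y\<in>cfgs n (a * b). \<Sum>y'\<in>cfgs n (a * b). \<Prod>i<a. G (blk b i y) (blk b i y')) =
     (\<Sum>y\<in>cfgs n (a * b). \<Prod>i<a. \<Sum>w'\<in>cfgs n b. G (blk b i y) w')"
    by (rule sum.cong[OF refl]) (rule sum_blocks[where F="\<lambda>i w'. G (blk b i _) w'"])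
  also have "\<dots> = (\<Prod>i<a. \<Sum>w\<in>cfgs n b. \<Sum>w'\<in>cfgs n b. G w w')"
    by (rule sum_blocks[where F="\<lambda>i w. \<Sum>w'\<in>cfgs n b. G w w'"])
  also have "\<dots> = (\<Sum>w\<in>cfgs n b. \<Sum>w'\<in>cfgs n b. G w w') ^ a"
    by simp
  finally show ?thesis .
qed

definition Mb :: "nat \<Rightarrow> op \<Rightarrow> bool \<times> bool \<Rightarrow> bool \<times> bool \<Rightarrow> complex" where
  "Mb b \<rho> s s' = (\<Sum>w\<in>cfgs 2 b. \<Sum>w'\<in>cfgs 2 b. k2 b (fst s) (snd s) w * tpow \<rho> b w w' * k2 b (fst s') (snd s') w')"

lemma sigma_prot:
  assumes b: "0 < b"
  shows "slocc_out 2 (a * b) 1 (Aprot a b) \<rho> x x' =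
    (\<Sum>s\<in>UNIV. \<Sum>s'\<in>UNIV. sgb (fst s \<and> x 0) * sgb (snd s \<and> x 1) * sgb (fst s' \<and> x' 0) * sgb (snd s' \<and> x' 1) * Mb b \<rho> s s' ^ a)"
proof -
  let ?c = "\<lambda>x s. sgb (fst s \<and> x 0) * sgb (snd s \<and> x 1)"
  let ?G = "\<lambda>s s' w w'. k2 b (fst s) (snd s) w * tpow \<rho> b w w' * k2 b (fst s') (snd s') w'"
  have "slocc_out 2 (a * b) 1 (Aprot a b) \<rho> x x' =
     (\<Sum>y\<in>cfgs 2 (a * b). \<Sum>y'\<in>cfgs 2 (a * b). kraus_el 2 (Aprot a b) 0 x y * tpow \<rho> (a * b) y y' * cnj (kraus_el 2 (Aprot a b) 0 x' y'))"
    by (simp add: slocc_out_def)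
  also have "\<dots> = (\<Sum>y\<in>cfgs 2 (a * b). \<Sum>y'\<in>cfgs 2 (a * b). \<Sum>s\<in>UNIV. \<Sum>s'\<in>UNIV.
      (?c x s * ?c x' s') * (\<Prod>i<a. ?G s s' (blk b i y) (blk b i y')))"
  proof (intro sum.cong refl)
    fix y y'
    have ck: "cnj (kraus_el 2 (Aprot a b) 0 x' y') = (\<Sum>s'\<in>UNIV. ?c x' s' * (\<Prod>i<a. k2 b (fst s') (snd s') (blk b i y')))"
      unfolding kraus_prot2[OF b] cnj_sum by (simp add: cnj_prod)
    show "kraus_el 2 (Aprot a b) 0 x y * tpow \<rho> (a * b) y y' * cnj (kraus_el 2 (Aprot a b) 0 x' y') =
      (\<Sum>s\<in>UNIV. \<Sum>s'\<in>UNIV. (?c x s * ?c x' s') * (\<Prod>i<a. ?G s s' (blk b i y) (blk b i y')))"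
      unfolding ck unfolding kraus_prot2[OF b] tpow_blocks sum_distrib_right[of _ _ "\<Prod>i<a. tpow \<rho> b (blk b i y) (blk b i y')"] sum_product prod.distrib
      by (rule sum.cong[OF refl], rule sum.cong[OF refl]) (simp add: ac_simps)
  qed
  also have "\<dots> = (\<Sum>s\<in>UNIV. \<Sum>s'\<in>UNIV. \<Sum>y\<in>cfgs 2 (a * b). \<Sum>y'\<in>cfgs 2 (a * b).
      (?c x s * ?c x' s') * (\<Prod>i<a. ?G s s' (blk b i y) (blk b i y')))"
    by (rule sum4_swap)
  also have "\<dots> = (\<Sum>s\<in>UNIV. \<Sum>s'\<in>UNIV. (?c x s * ?c x' s') * Mb b \<rho> s s' ^ a)"
  proof (intro sum.cong refl)
    fix s s' :: "bool \<times> bool"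
    show "(\<Sum>y\<in>cfgs 2 (a * b). \<Sum>y'\<in>cfgs 2 (a * b). (?c x s * ?c x' s') * (\<Prod>i<a. ?G s s' (blk b i y) (blk b i y'))) =
      (?c x s * ?c x' s') * Mb b \<rho> s s' ^ a"
      unfolding sum_distrib_left[symmetric] Mb_def
      using sum2_blocks[where G="?G s s'" and n=2 and a=a and b=b] by simp
  qed
  finally show ?thesis by (simp add: ac_simps)
qed


definition cst :: "nat \<Rightarrow> (nat \<Rightarrow> bool) \<Rightarrow> (nat \<Rightarrow> nat \<Rightarrow> bool)" where
  "cst b u = (\<lambda>j. if j < b then u else (\<lambda>_. False))"

lemma sum_const_cfgs:
  fixes f :: "(nat \<Rightarrow> nat \<Rightarrow> bool) \<Rightarrow> complex"
  assumes b: "0 < b" and nz: "\<And>w. w \<in> cfgs n b \<Longrightarrow> f w \<noteq> 0 \<Longrightarrow> (\<forall>j<b. w j = w 0)"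
  shows "(\<Sum>w\<in>cfgs n b. f w) = (\<Sum>u\<in>qbits n. f (cst b u))"
proof -
  have sub: "cst b ` qbits n \<subseteq> cfgs n b"
    unfolding cst_def cfgs_def by auto
  have "(\<Sum>w\<in>cfgs n b. f w) = (\<Sum>w\<in>cst b ` qbits n. f w)"
  proof (rule sum.mono_neutral_right[OF finite_cfgs sub])
    show "\<forall>w\<in>cfgs n b - cst b ` qbits n. f w = 0"
    proof
      fix w assume w: "w \<in> cfgs n b - cst b ` qbits n"
      show "f w = 0"
      proof (rule ccontr)
        assume "f w \<noteq> 0"
        moreover have "w \<in> cfgs n b" using w by simp
        ultimately have c: "\<forall>j<b. w j = w 0" using nz by blast
        have "w = cst b (w 0)"
        proof
          fix j show "w j = cst b (w 0) j"
          proof (cases "j < b")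
            case True
            then have "w j = w 0" using c by blast
            then show ?thesis using True unfolding cst_def by simp
          next
            case False
            then have "w j = (\<lambda>_. False)" using w unfolding cfgs_def by simp
            then show ?thesis using False unfolding cst_def by simp
          qed
        qed
        moreover have "w 0 \<in> qbits n" using w b unfolding cfgs_def by simp
        ultimately have "w \<in> cst b ` qbits n" by (rule image_eqI)
        then show False using w by simp
      qed
    qed
  qed
  also have "\<dots> = (\<Sum>u\<in>qbits n. f (cst b u))"
  proof (rule sum.reindex[unfolded comp_def])
    show "inj_on (cst b) (qbits n)"
    proof (rule inj_onI)
      fix u v assume "cst b u = cst b v"
      then have "cst b u 0 = cst b v 0" by simp
      then show "u = v" using b unfolding cst_def by simp
    qed
  qed
  finally show ?thesis .
qed

lemma q2_eq:
  assumes "u \<in> qbits 2" "v \<in> qbits 2" "u 0 = v 0" "u 1 = v 1" shows "u = v"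
proof -
  have "u = b2 (u 0) (u 1)" by (rule b2_qbits[OF assms(1)])
  also have "\<dots> = b2 (v 0) (v 1)" using assms(3,4) by simp
  also have "\<dots> = v" by (rule b2_qbits[OF assms(2), symmetric])
  finally show ?thesis .
qed

lemma k1_nz: assumes "k1 b s w \<noteq> 0" shows "\<forall>j<b. w j = w 0"
proof (rule ccontr)
  assume "\<not> (\<forall>j<b. w j = w 0)"
  then have "k1 b s w = 0" unfolding k1_def by (rule if_not_P)
  then show False using assms by contradiction
qed

lemma k2_nz: assumes w: "w \<in> cfgs 2 b" and k: "k2 b s0 s1 w \<noteq> 0" shows "\<forall>j<b. w j = w 0"
proof (intro allI impI)
  fix j assume j: "j < b"
  have "k1 b s0 (\<lambda>j. w j 0) \<noteq> 0" "k1 b s1 (\<lambda>j. w j 1) \<noteq> 0" using k unfolding k2_def by auto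
  then have "w j 0 = w 0 0" "w j 1 = w 0 1" using k1_nz j by blast+
  moreover have "w j \<in> qbits 2" "w 0 \<in> qbits 2" using w j unfolding cfgs_def by auto
  ultimately show "w j = w 0" using q2_eq by blast
qed

lemma k2_cst: "0 < b \<Longrightarrow> k2 b s0 s1 (cst b u) = sgb (s0 \<and> u 0) * sgb (s1 \<and> u 1)"
  unfolding k2_def k1_def cst_def by simp

lemma tpow_cst: "tpow \<rho> b (cst b u) (cst b u') = \<rho> u u' ^ b"
  by (simp add: tpow_def cst_def)

lemma Mb_red:
  assumes b: "0 < b"
  shows "Mb b \<rho> s s' = (\<Sum>u\<in>qbits 2. \<Sum>u'\<in>qbits 2.
     sgb (fst s \<and> u 0) * sgb (snd s \<and> u 1) * \<rho> u u' ^ b * (sgb (fst s' \<and> u' 0) * sgb (snd s' \<and> u' 1)))"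
proof -
  have "Mb b \<rho> s s' = (\<Sum>u\<in>qbits 2. \<Sum>w'\<in>cfgs 2 b. k2 b (fst s) (snd s) (cst b u) * tpow \<rho> b (cst b u) w' * k2 b (fst s') (snd s') w')"
    unfolding Mb_def
  proof (rule sum_const_cfgs[OF b])
    fix w assume w: "w \<in> cfgs 2 b" and nz: "(\<Sum>w'\<in>cfgs 2 b. k2 b (fst s) (snd s) w * tpow \<rho> b w w' * k2 b (fst s') (snd s') w') \<noteq> 0"
    have "k2 b (fst s) (snd s) w \<noteq> 0"
    proof
      assume "k2 b (fst s) (snd s) w = 0"
      then have "(\<Sum>w'\<in>cfgs 2 b. k2 b (fst s) (snd s) w * tpow \<rho> b w w' * k2 b (fst s') (snd s') w') = 0" by simp
      then show False using nz by contradiction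
    qed
    then show "\<forall>j<b. w j = w 0" by (rule k2_nz[OF w])
  qed
  also have "\<dots> = (\<Sum>u\<in>qbits 2. \<Sum>u'\<in>qbits 2. k2 b (fst s) (snd s) (cst b u) * tpow \<rho> b (cst b u) (cst b u') * k2 b (fst s') (snd s') (cst b u'))"
  proof (rule sum.cong[OF refl])
    fix u
    show "(\<Sum>w'\<in>cfgs 2 b. k2 b (fst s) (snd s) (cst b u) * tpow \<rho> b (cst b u) w' * k2 b (fst s') (snd s') w') =
       (\<Sum>u'\<in>qbits 2. k2 b (fst s) (snd s) (cst b u) * tpow \<rho> b (cst b u) (cst b u') * k2 b (fst s') (snd s') (cst b u'))"
    proof (rule sum_const_cfgs[OF b])
      fix w assume w: "w \<in> cfgs 2 b" and nz: "k2 b (fst s) (snd s) (cst b u) * tpow \<rho> b (cst b u) w * k2 b (fst s') (snd s') w \<noteq> 0"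
      have "k2 b (fst s') (snd s') w \<noteq> 0"
      proof
        assume "k2 b (fst s') (snd s') w = 0"
        then show False using nz by simp
      qed
      then show "\<forall>j<b. w j = w 0" by (rule k2_nz[OF w])
    qed
  qed
  finally show ?thesis by (simp add: k2_cst[OF b] tpow_cst)
qed


definition al :: "nat \<Rightarrow> real \<Rightarrow> real" where "al b p = ((FF p + qq p) / 2) ^ b"
definition be :: "nat \<Rightarrow> real \<Rightarrow> real" where "be b p = (qq p) ^ b"
definition ga :: "nat \<Rightarrow> real \<Rightarrow> real" where "ga b p = ((FF p - qq p) / 2) ^ b"
definition sr :: "bool \<Rightarrow> real" where "sr s = (if s then -1 else 1)"

definition mv :: "nat \<Rightarrow> real \<Rightarrow> bool \<times> bool \<Rightarrow> bool \<times> bool \<Rightarrow> real" where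
  "mv b p s s' = al b p * (1 + sr (fst s) * sr (snd s) * sr (fst s') * sr (snd s'))
     + be b p * (sr (snd s) * sr (snd s') + sr (fst s) * sr (fst s'))
     + ga b p * (sr (fst s') * sr (snd s') + sr (fst s) * sr (snd s))"

lemma rhoBpow:
  assumes b: "0 < b"
  shows "depol_all p 2 (proj bell) (b2 a c) (b2 a' c') ^ b =
    complex_of_real (if a = a' \<and> c = c' then (if a = c then al b p else be b p) else if a = c \<and> a' = c' then ga b p else 0)"
proof -
  have e: "qq p + (FF p - qq p) / 2 = (FF p + qq p) / 2" by (simp add: field_simps)
  have "((if a = a' \<and> c = c' then qq p else 0) + (if a = c \<and> a' = c' then (FF p - qq p) / 2 else 0)) ^ b =
    (if a = a' \<and> c = c' then (if a = c then al b p else be b p) else if a = c \<and> a' = c' then ga b p else 0)"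
    by (cases a; cases c; cases a'; cases c') (simp_all add: e al_def be_def ga_def b)
  then show ?thesis
    unfolding rhoB of_real_power[symmetric] by (rule arg_cong)
qed

lemma Mb_val:
  assumes b: "0 < b"
  shows "Mb b (depol_all p 2 (proj bell)) s s' = complex_of_real (mv b p s s')"
proof -
  obtain s0 s1 s2 s3 where s: "s = (s0, s1)" "s' = (s2, s3)" by (cases s; cases s') auto
  show ?thesis
    unfolding Mb_red[OF b] sum_qbits2 rhoBpow[OF b] s mv_def
    by (cases s0; cases s1; cases s2; cases s3) (simp_all add: sgb_def sr_def algebra_simps)
qed


lemma tr_prot:
  assumes b: "0 < b"
  shows "trace_op 2 (slocc_out 2 (a * b) 1 (Aprot a b) (depol_all p 2 (proj bell))) =
    complex_of_real (8 * ((2 * al b p + 2 * be b p + 2 * ga b p) ^ a + (2 * al b p + 2 * be b p - 2 * ga b p) ^ a))"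
  unfolding trace_op_def sum_qbits2 sigma_prot[OF b] Mb_val[OF b] sum_U2
  by (simp add: sgb_def mv_def sr_def algebra_simps)

lemma ov_prot:
  assumes b: "0 < b"
  shows "overlap 2 bell (slocc_out 2 (a * b) 1 (Aprot a b) (depol_all p 2 (proj bell))) =
    complex_of_real (4 * ((2 * al b p + 2 * be b p + 2 * ga b p) ^ a + (2 * al b p - 2 * be b p + 2 * ga b p) ^ a))"
  unfolding overlap_def sum_qbits2 sigma_prot[OF b] Mb_val[OF b] sum_U2
  by (simp add: bell_def s2 s2' sgb_def mv_def sr_def algebra_simps)

lemma pow_le_inv:
  fixes x :: real
  assumes "0 \<le> x" "x \<le> 1"
  shows "(1 - x) ^ a * (1 + real a * x) \<le> 1"
proof -
  have "1 + real a * x \<le> (1 + x) ^ a" using Bernoulli_inequality[of x a] assms by simp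
  then have "(1 - x) ^ a * (1 + real a * x) \<le> (1 - x) ^ a * (1 + x) ^ a"
    using assms by (intro mult_left_mono) simp_all
  also have "\<dots> = (1 - x * x) ^ a" by (simp add: power_mult_distrib[symmetric] algebra_simps)
  also have "\<dots> \<le> 1" using assms by (intro power_le_one) (simp_all add: mult_le_one)
  finally show ?thesis .
qed

lemma ineq_main:
  fixes uAL uBE uGA e :: real and a :: nat
  assumes uAL: "0 < uAL" and uBE: "0 \<le> uBE" and uGA: "0 \<le> uGA" and bea: "uBE \<le> uAL" and gaa: "uGA \<le> uAL"
    and e0: "0 < e" and e1: "e \<le> 1"
    and A1: "4 * real a * uBE \<le> e * uAL" and A2: "6 * uAL \<le> e * real a * uGA"
  shows "(1 - e) * (8 * ((2 * uAL + 2 * uBE + 2 * uGA) ^ a + (2 * uAL + 2 * uBE - 2 * uGA) ^ a))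
     \<le> 4 * ((2 * uAL + 2 * uBE + 2 * uGA) ^ a + (2 * uAL - 2 * uBE + 2 * uGA) ^ a)"
proof -
  define P where "P = 2 * uAL + 2 * uBE + 2 * uGA"
  have P0: "0 < P" using uAL uBE uGA by (simp add: P_def)
  define y where "y = 4 * uBE / P"
  define x where "x = 4 * uGA / P"
  have y0: "0 \<le> y" and y1: "y \<le> 1" using P0 uBE bea uGA by (simp_all add: y_def P_def field_simps)
  have x0: "0 \<le> x" and x1: "x \<le> 1" using P0 uGA gaa uBE by (simp_all add: x_def P_def field_simps)
  have Qe: "2 * uAL - 2 * uBE + 2 * uGA = P * (1 - y)" using P0 by (simp add: y_def P_def field_simps)
  have Re: "2 * uAL + 2 * uBE - 2 * uGA = P * (1 - x)" using P0 by (simp add: x_def P_def field_simps)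
  have ay: "real a * y \<le> e / 2"
  proof -
    have "real a * y = 4 * real a * uBE / P" by (simp add: y_def)
    also have "\<dots> \<le> 4 * real a * uBE / (2 * uAL)"
      using uAL uBE P0 by (intro divide_left_mono) (simp_all add: P_def uGA)
    also have "\<dots> \<le> e * uAL / (2 * uAL)" using A1 uAL by (intro divide_right_mono) simp_all
    also have "\<dots> = e / 2" using uAL by simp
    finally show ?thesis .
  qed
  have Qa: "(1 - e / 2) * P ^ a \<le> (P * (1 - y)) ^ a"
  proof -
    have "1 - e / 2 \<le> 1 + real a * (- y)" using ay by simp
    also have "\<dots> \<le> (1 + (- y)) ^ a" using y1 by (intro Bernoulli_inequality) simp
    finally have "1 - e / 2 \<le> (1 - y) ^ a" by simp
    then have "(1 - e / 2) * P ^ a \<le> (1 - y) ^ a * P ^ a" using P0 by (intro mult_right_mono) simp_all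
    then show ?thesis by (simp add: power_mult_distrib mult.commute)
  qed
  have ax: "4 / e \<le> real a * x"
  proof -
    have "P \<le> 6 * uAL" using bea gaa by (simp add: P_def)
    have "4 / e = 4 * (6 * uAL) / (e * (6 * uAL))" using uAL e0 by simp
    also have "\<dots> \<le> 4 * (e * real a * uGA) / (e * (6 * uAL))"
      using A2 uAL e0 by (intro divide_right_mono mult_left_mono) simp_all
    also have "\<dots> = 4 * real a * uGA / (6 * uAL)" using e0 by simp
    also have "\<dots> \<le> 4 * real a * uGA / P"
      using P0 \<open>P \<le> 6 * uAL\<close> uGA by (intro divide_left_mono) simp_all
    also have "\<dots> = real a * x" by (simp add: x_def)
    finally show ?thesis .
  qed
  have Ra: "(P * (1 - x)) ^ a \<le> e / 4 * P ^ a"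
  proof -
    have i: "(1 - x) ^ a * (1 + real a * x) \<le> 1" by (rule pow_le_inv[OF x0 x1])
    have pos: "0 < 1 + real a * x" using x0 by (simp add: add_pos_nonneg)
    have pe: "0 < 1 + 4 / e" using e0 by (simp add: add_pos_pos)
    have "(1 - x) ^ a \<le> 1 / (1 + real a * x)" using i pos by (simp add: field_simps)
    also have "\<dots> \<le> 1 / (1 + 4 / e)" using ax e0 by (intro divide_left_mono) (auto intro: mult_pos_pos simp: pos pe)
    also have "\<dots> = e / (e + 4)" using e0 by (simp add: field_simps)
    also have "\<dots> \<le> e / 4" using e0 by (intro divide_left_mono) simp_all
    finally have "(1 - x) ^ a \<le> e / 4" .
    then have "(1 - x) ^ a * P ^ a \<le> e / 4 * P ^ a" using P0 by (intro mult_right_mono) simp_all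
    then show ?thesis by (simp add: power_mult_distrib mult.commute)
  qed
  have R0: "0 \<le> (P * (1 - x)) ^ a" using P0 x1 by simp
  have t0: "0 \<le> P ^ a" using P0 by simp
  have "(1 - e) * (8 * (P ^ a + (P * (1 - x)) ^ a)) \<le> (1 - e) * (8 * (P ^ a + e / 4 * P ^ a))"
    using Ra e1 by (intro mult_left_mono) simp_all
  also have "\<dots> = ((1 - e) * (8 + 2 * e)) * P ^ a" by (simp add: algebra_simps)
  also have "\<dots> \<le> (8 - 2 * e) * P ^ a"
  proof (rule mult_right_mono[OF _ t0])
    have "(1 - e) * (8 + 2 * e) = 8 - 6 * e - 2 * e * e" by (simp add: algebra_simps)
    moreover have "0 \<le> e * e" by simp
    ultimately show "(1 - e) * (8 + 2 * e) \<le> 8 - 2 * e" using e0 by linarith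
  qed
  also have "\<dots> = 4 * (P ^ a + (1 - e / 2) * P ^ a)" by (simp add: algebra_simps)
  also have "\<dots> \<le> 4 * (P ^ a + (P * (1 - y)) ^ a)" using Qa by simp
  finally show ?thesis unfolding Qe Re P_def .
qed


lemma choose_ab:
  fixes X Y Z e :: real
  assumes Z0: "0 \<le> Z" and ZY: "Z < Y" and YX: "Y \<le> X" and e0: "0 < e" and e1: "e \<le> 1"
  shows "\<exists>b a. 0 < b \<and> 0 < a \<and> 4 * real a * (Z / 2) ^ b \<le> e * (X / 2) ^ b \<and> 6 * (X / 2) ^ b \<le> e * real a * (Y / 2) ^ b"
proof -
  have Y0: "0 < Y" using Z0 ZY by simp
  define t0 where "t0 = Z / Y"
  have t00: "0 \<le> t0" and t01: "t0 < 1" using Z0 ZY Y0 by (simp_all add: t0_def)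
  obtain n where n: "t0 ^ n < e * e / 28" using real_arch_pow_inv[of "e * e / 28" t0] e0 t01 by auto
  define b where "b = Suc n"
  define t where "t = t0 ^ b"
  have t0le: "0 \<le> t" using t00 by (simp add: t_def)
  have tle: "t \<le> e * e / 28"
  proof -
    have "t = t0 * t0 ^ n" by (simp add: t_def b_def)
    also have "\<dots> \<le> 1 * t0 ^ n" using t00 t01 by (intro mult_right_mono) simp_all
    finally show ?thesis using n by simp
  qed
  define uAL where "uAL = (X / 2) ^ b"
  define uGA where "uGA = (Y / 2) ^ b"
  define uBE where "uBE = (Z / 2) ^ b"
  have ga0: "0 < uGA" using Y0 by (simp add: uGA_def)
  have gaal: "uGA \<le> uAL" unfolding uGA_def uAL_def using Y0 YX by (intro power_mono) simp_all
  have al0: "0 < uAL" using ga0 gaal by simp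
  have bet: "uBE = t * uGA"
  proof -
    have zz: "Z / 2 = t0 * (Y / 2)" using Y0 by (simp add: t0_def)
    show ?thesis unfolding uBE_def uGA_def t_def zz by (rule power_mult_distrib)
  qed
  define r where "r = 6 * uAL / (e * uGA)"
  have r0: "0 < r" using al0 ga0 e0 by (simp add: r_def)
  define a where "a = nat \<lceil>r\<rceil>"
  have ar: "r \<le> real a" and ar1: "real a < r + 1"
    using r0 by (simp_all add: a_def) linarith+
  have a0: "0 < a" using ar r0 by simp
  have A2: "6 * uAL \<le> e * real a * uGA"
  proof -
    have "6 * uAL = r * (e * uGA)" using e0 ga0 by (simp add: r_def)
    also have "\<dots> \<le> real a * (e * uGA)" using ar e0 ga0 by (intro mult_right_mono) simp_all
    finally show ?thesis by (simp add: ac_simps)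
  qed
  have A1: "4 * real a * uBE \<le> e * uAL"
  proof -
    have "4 * real a * uBE = 4 * real a * t * uGA" by (simp add: bet)
    also have "\<dots> \<le> 4 * (r + 1) * t * uGA" using ar1 t0le ga0 by (intro mult_right_mono) simp_all
    also have "\<dots> = t * (24 * uAL / e + 4 * uGA)" using e0 ga0 by (simp add: r_def field_simps)
    also have "\<dots> \<le> t * (24 * uAL / e + 4 * uAL / e)"
    proof -
      have "uAL * e \<le> uAL * 1" using e1 al0 by (intro mult_left_mono) simp_all
      then have "uAL \<le> uAL / e" using e0 by (simp add: le_divide_eq)
      then have "4 * uGA \<le> 4 * uAL / e" using gaal by simp
      then show ?thesis using t0le by (intro mult_left_mono) simp_all
    qed
    also have "\<dots> = t * (28 / e) * uAL" by (simp add: field_simps)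
    also have "\<dots> \<le> (e * e / 28) * (28 / e) * uAL" using tle e0 al0 by (intro mult_right_mono) simp_all
    also have "\<dots> = e * uAL" using e0 by simp
    finally show ?thesis .
  qed
  show ?thesis
    using A1 A2 a0 by (intro exI[of _ b] exI[of _ a]) (simp add: b_def uAL_def uBE_def uGA_def)
qed

lemma FF_le1: "0 \<le> p \<Longrightarrow> p \<le> 1 \<Longrightarrow> FF p \<le> 1"
proof -
  assume p: "0 \<le> p" "p \<le> 1"
  have "(1 - p) * (1 - p) \<le> (1 - p) * 1" using p by (intro mult_left_mono) simp_all
  then have h1: "(1 - p)^2 \<le> 1 - p" by (simp add: power2_eq_square)
  have "p * p \<le> p * 1" using p by (intro mult_left_mono) simp_all
  then have h2: "p^2/3 \<le> p" using p by (simp add: power2_eq_square)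
  from h1 h2 show ?thesis by (simp add: FF_def)
qed

lemma part2b:
  assumes p0: "0 \<le> p" and p1: "p \<le> 1" and F: "1/2 < FF p"
  shows "purifiable 2 (depol_all p 2 (proj bell)) bell"
  unfolding purifiable_def
proof (intro allI impI)
  fix \<epsilon> :: real assume eps: "0 < \<epsilon>"
  define e where "e = min \<epsilon> 1"
  have e0: "0 < e" and e1: "e \<le> 1" and ee: "e \<le> \<epsilon>" using eps by (auto simp: e_def)
  have F1: "FF p \<le> 1" by (rule FF_le1[OF p0 p1])
  have q0: "0 \<le> qq p" using F1 by (simp add: qq_def)
  have ZY: "2 * qq p < FF p - qq p" using F unfolding qq_def by (simp add: field_simps)
  obtain b a where b: "0 < b" and a: "0 < a"
    and A1': "4 * real a * (2 * qq p / 2) ^ b \<le> e * ((FF p + qq p) / 2) ^ b"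
    and A2': "6 * ((FF p + qq p) / 2) ^ b \<le> e * real a * ((FF p - qq p) / 2) ^ b"
    using choose_ab[of "2 * qq p" "FF p - qq p" "FF p + qq p" e] q0 ZY e0 e1 by auto
  have A1: "4 * real a * be b p \<le> e * al b p" using A1' by (simp add: be_def al_def)
  have A2: "6 * al b p \<le> e * real a * ga b p" using A2' by (simp add: ga_def al_def)
  have ga0: "0 \<le> ga b p" using ZY q0 by (simp add: ga_def)
  have be0: "0 \<le> be b p" using q0 by (simp add: be_def)
  have gaal: "ga b p \<le> al b p" unfolding ga_def al_def using ZY q0 by (intro power_mono) simp_all
  have beal: "be b p \<le> al b p" unfolding be_def al_def using ZY q0 by (intro power_mono) simp_all
  have al0: "0 < al b p" using F q0 by (simp add: al_def)
  let ?P = "2 * al b p + 2 * be b p + 2 * ga b p"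
  let ?R = "2 * al b p + 2 * be b p - 2 * ga b p"
  let ?Q = "2 * al b p - 2 * be b p + 2 * ga b p"
  have main: "(1 - e) * (8 * (?P ^ a + ?R ^ a)) \<le> 4 * (?P ^ a + ?Q ^ a)"
    by (rule ineq_main[OF al0 be0 ga0 beal gaal e0 e1 A1 A2])
  have Pp: "0 < ?P ^ a" using al0 be0 ga0 by simp
  have Rp: "0 \<le> ?R ^ a" using gaal be0 by simp
  have trp: "0 < 8 * (?P ^ a + ?R ^ a)" using Pp Rp by simp
  have "(1 - \<epsilon>) * (8 * (?P ^ a + ?R ^ a)) \<le> (1 - e) * (8 * (?P ^ a + ?R ^ a))"
    using ee trp by (intro mult_right_mono) simp_all
  also note main
  finally have fin: "(1 - \<epsilon>) * (8 * (?P ^ a + ?R ^ a)) \<le> 4 * (?P ^ a + ?Q ^ a)" .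
  have "0 < a * b \<and> 0 < Re (trace_op 2 (slocc_out 2 (a * b) 1 (Aprot a b) (depol_all p 2 (proj bell)))) \<and>
          (1 - \<epsilon>) * Re (trace_op 2 (slocc_out 2 (a * b) 1 (Aprot a b) (depol_all p 2 (proj bell))))
          \<le> Re (overlap 2 bell (slocc_out 2 (a * b) 1 (Aprot a b) (depol_all p 2 (proj bell))))"
    unfolding tr_prot[OF b] ov_prot[OF b] using fin trp a b by simp
  then show "\<exists>k m A. 0 < k \<and> 0 < Re (trace_op 2 (slocc_out 2 k m A (depol_all p 2 (proj bell)))) \<and>
          (1 - \<epsilon>) * Re (trace_op 2 (slocc_out 2 k m A (depol_all p 2 (proj bell))))
          \<le> Re (overlap 2 bell (slocc_out 2 k m A (depol_all p 2 (proj bell))))"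
    by blast
qed

theorem mainTheorem6:
  fixes p :: real
  assumes "0 \<le> p" and "p \<le> 1"
  shows "(\<forall>\<psi>. is_graph_state path_graph 3 \<psi> \<longrightarrow>
            27 - 126 * p + 156 * p ^ 2 - 64 * p ^ 3 \<le> 0 \<longrightarrow>
            \<not> purifiable 3 (depol_all p 3 (proj \<psi>)) \<psi>)
       \<and> (purifiable 2 (depol_all p 2 (proj bell)) bell \<longleftrightarrow> (1 - p) ^ 2 + p ^ 2 / 3 > 1 / 2)"
proof
  show "\<forall>\<psi>. is_graph_state path_graph 3 \<psi> \<longrightarrow>
            27 - 126 * p + 156 * p ^ 2 - 64 * p ^ 3 \<le> 0 \<longrightarrow>
            \<not> purifiable 3 (depol_all p 3 (proj \<psi>)) \<psi>"
    using part1[OF assms] by blast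
  show "purifiable 2 (depol_all p 2 (proj bell)) bell \<longleftrightarrow> (1 - p) ^ 2 + p ^ 2 / 3 > 1 / 2"
  proof
    assume pur: "purifiable 2 (depol_all p 2 (proj bell)) bell"
    show "(1 - p) ^ 2 + p ^ 2 / 3 > 1 / 2"
    proof (rule ccontr)
      assume "\<not> (1 - p) ^ 2 + p ^ 2 / 3 > 1 / 2"
      then have "FF p \<le> 1/2" by (simp add: FF_def)
      then show False using part2a[OF assms] pur by blast
    qed
  next
    assume "(1 - p) ^ 2 + p ^ 2 / 3 > 1 / 2"
    then have "1/2 < FF p" by (simp add: FF_def)
    then show "purifiable 2 (depol_all p 2 (proj bell)) bell" by (rule part2b[OF assms])
  qed
qed

end
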